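(* Let $N\ge 2$ and let $(\nu_r^{(1:N)})_{r\ge1}$ be vectors of non-negative integers with $\sum_i \nu_r^{(i)} = N$, with $c_N$, $D_N$, $\tau_N$ as defined below, and assume $\tau_N(u)<\infty$ for all $u\ge0$. Fix $t > 0$ and $l \in \mathbb{N}$. Then for any constant $B > 0$, $$\sum_{\substack{s_1,\dots,s_l=1\\\text{all distinct}}}^{\tau_N(t)}\prod_{j=1}^l\big[c_N(s_j) + BD_N(s_j)\big] \leq \sum_{\substack{s_1,\dots,s_l=1\\\text{all distinct}}}^{\tau_N(t)}\prod_{j=1}^l c_N(s_j) + \Bigg(\sum_{s=1}^{\tau_N(t)} D_N(s)\Bigg)(t+1)^{l-1}(1+B)^l.$$
   Context: $(x)_k$ is the falling factorial. $c_N(r) := \frac{1}{(N)_2}\sum_{i=1}^N(\nu_r^{(i)})_2$; $D_N(r) := \frac{1}{N(N)_2}\sum_{i=1}^N(\nu_r^{(i)})_2\{\nu_r^{(i)} + \frac1N\sum_{j\ne i}(\nu_r^{(j)})^2\}$; $\tau_N(u) := \inf\{s\in\{0,1,2,\dots\} : \sum_{r=1}^s c_N(r) \ge u\}$. *)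

theory Defs
  imports "HOL-Analysis.Analysis"
begin

definition falling :: "real \<Rightarrow> nat \<Rightarrow> real" where
  "falling x k = (\<Prod>i<k. x - real i)"

text \<open>nu r i = \<nu>_r^{(i)}, for generations r \<ge> 1 and individuals i \<in> {1..N}.\<close>
definition cN :: "nat \<Rightarrow> (nat \<Rightarrow> nat \<Rightarrow> nat) \<Rightarrow> nat \<Rightarrow> real" where
  "cN N nu r = (1 / falling (real N) 2) * (\<Sum>i=1..N. falling (real (nu r i)) 2)"

definition DN :: "nat \<Rightarrow> (nat \<Rightarrow> nat \<Rightarrow> nat) \<Rightarrow> nat \<Rightarrow> real" where
  "DN N nu r = (1 / (real N * falling (real N) 2)) *
     (\<Sum>i=1..N. falling (real (nu r i)) 2 *
        (real (nu r i) + (1 / real N) * (\<Sum>j\<in>{1..N} - {i}. (real (nu r j))^2)))"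

definition tauN :: "nat \<Rightarrow> (nat \<Rightarrow> nat \<Rightarrow> nat) \<Rightarrow> real \<Rightarrow> nat" where
  "tauN N nu u = (LEAST s. (\<Sum>r=1..s. cN N nu r) \<ge> u)"

definition distinct_tuples :: "nat \<Rightarrow> nat \<Rightarrow> (nat \<Rightarrow> nat) set" where
  "distinct_tuples l T = {s. s \<in> {1..l} \<rightarrow>\<^sub>E {1..T} \<and> inj_on s {1..l}}"

end

theory Submission
  imports Defs
begin

lemma falling2: "falling x 2 = x * (x - 1)"
  by (simp add: falling_def numeral_2_eq_2)

lemma falling2_nat_nonneg: "falling (real n) 2 \<ge> 0"
  by (cases n) (auto simp: falling2)

lemma cD_bounds:
  fixes N :: nat and nu :: "nat \<Rightarrow> nat \<Rightarrow> nat"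
  assumes N2: "N \<ge> 2" and sumN: "(\<Sum>i=1..N. nu r i) = N"
  shows "0 \<le> DN N nu r" "DN N nu r \<le> cN N nu r" "cN N nu r \<le> 1"
proof -
  define v where "v i = real (nu r i)" for i
  have vnn: "v i \<ge> 0" for i by (simp add: v_def)
  have sv: "(\<Sum>i=1..N. v i) = real N" unfolding v_def
    using sumN by (metis of_nat_sum)
  have vle: "v i \<le> real N" if "i \<in> {1..N}" for i
  proof -
    have "v i \<le> (\<Sum>i=1..N. v i)"
      using that vnn by (intro member_le_sum) auto
    thus ?thesis using sv by simp
  qed
  have FN: "falling (real N) 2 > 0" using N2 by (simp add: falling2)
  have Npos: "real N > 0" using N2 by simp
  have fv: "falling (real (nu r i)) 2 = v i * (v i - 1)" for i by (simp add: falling2 v_def)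
  have fvnn: "v i * (v i - 1) \<ge> 0" for i using falling2_nat_nonneg fv by metis
  have "(\<Sum>i=1..N. v i * (v i - 1)) \<le> (\<Sum>i=1..N. v i * (real N - 1))"
  proof (rule sum_mono)
    fix i assume i: "i \<in> {1..N}"
    show "v i * (v i - 1) \<le> v i * (real N - 1)"
      using vle[OF i] vnn[of i] by (intro mult_left_mono) auto
  qed
  also have "\<dots> = real N * (real N - 1)" using sv by (simp add: sum_distrib_right[symmetric])
  also have "\<dots> = falling (real N) 2" by (simp add: falling2)
  finally have sc: "(\<Sum>i=1..N. v i * (v i - 1)) \<le> falling (real N) 2" .
  have cN_eq: "cN N nu r = (1 / falling (real N) 2) * (\<Sum>i=1..N. v i * (v i - 1))"
    by (simp add: cN_def fv)
  show "cN N nu r \<le> 1" unfolding cN_eq using sc FN by (simp add: divide_simps)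
  define S where "S i = (\<Sum>j\<in>{1..N} - {i}. (v j)^2)" for i
  have DN_eq: "DN N nu r = (1 / (real N * falling (real N) 2)) *
     (\<Sum>i=1..N. v i * (v i - 1) * (v i + (1 / real N) * S i))"
    by (simp add: DN_def fv S_def v_def)
  have Snn: "S i \<ge> 0" for i unfolding S_def by (intro sum_nonneg) auto
  have tnn: "0 \<le> v i * (v i - 1) * (v i + (1 / real N) * S i)" for i
    by (rule mult_nonneg_nonneg[OF fvnn]) (use vnn Snn Npos in auto)
  show "0 \<le> DN N nu r" unfolding DN_eq using FN Npos
    by (intro mult_nonneg_nonneg[OF _ sum_nonneg[OF tnn]]) auto
  have termle: "v i * (v i - 1) * (v i + (1 / real N) * S i) \<le> real N * (v i * (v i - 1))"
    if i: "i \<in> {1..N}" for i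
  proof -
    have srest: "(\<Sum>j\<in>{1..N} - {i}. v j) = real N - v i"
      using sv i by (simp add: sum_diff1)
    have "S i \<le> (\<Sum>j\<in>{1..N} - {i}. v j * (real N - v i))"
      unfolding S_def
    proof (rule sum_mono)
      fix j assume j: "j \<in> {1..N} - {i}"
      have "v j \<le> (\<Sum>j\<in>{1..N} - {i}. v j)" using j vnn by (intro member_le_sum) auto
      hence "v j \<le> real N - v i" using srest by simp
      thus "(v j)^2 \<le> v j * (real N - v i)" using vnn[of j]
        by (simp add: power2_eq_square mult_left_mono)
    qed
    also have "\<dots> = (real N - v i)^2" using srest
      by (simp add: sum_distrib_right[symmetric] power2_eq_square)
    finally have Sle: "S i \<le> (real N - v i)^2" .
    have "v i + (1 / real N) * S i \<le> v i + (1 / real N) * (real N - v i)^2"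
      using Sle Npos by (simp add: divide_simps)
    also have "\<dots> \<le> real N"
    proof -
      have "v i * real N + (real N - v i)^2 \<le> real N * real N"
        using vle[OF i] vnn[of i]
        by (simp add: power2_eq_square algebra_simps mult_right_mono)
      thus ?thesis using Npos by (simp add: divide_simps)
    qed
    finally show ?thesis using fvnn[of i] by (metis mult.commute mult_left_mono)
  qed
  have "DN N nu r \<le> (1 / (real N * falling (real N) 2)) * (\<Sum>i=1..N. real N * (v i * (v i - 1)))"
    unfolding DN_eq using FN Npos by (intro mult_left_mono sum_mono termle) auto
  also have "\<dots> = cN N nu r" unfolding cN_eq using Npos
    by (simp add: sum_distrib_left[symmetric])
  finally show "DN N nu r \<le> cN N nu r" .
qed


lemma sum_c_le:
  fixes N :: nat and nu :: "nat \<Rightarrow> nat \<Rightarrow> nat" and t :: real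
  assumes N2: "N \<ge> 2" and sumN: "\<And>r. r \<ge> 1 \<Longrightarrow> (\<Sum>i=1..N. nu r i) = N"
    and ex: "\<And>u. u \<ge> 0 \<Longrightarrow> \<exists>s. (\<Sum>r=1..s. cN N nu r) \<ge> u" and t: "t > 0"
  shows "(\<Sum>r=1..tauN N nu t. cN N nu r) \<le> t + 1"
proof (cases "tauN N nu t")
  case 0 thus ?thesis using t by simp
next
  case (Suc m)
  have "\<not> (\<Sum>r=1..m. cN N nu r) \<ge> t"
  proof
    assume "(\<Sum>r=1..m. cN N nu r) \<ge> t"
    hence "tauN N nu t \<le> m" unfolding tauN_def by (rule Least_le)
    thus False using Suc by simp
  qed
  moreover have "cN N nu (Suc m) \<le> 1" using cD_bounds(3)[OF N2 sumN] by simp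
  ultimately show ?thesis using Suc by simp
qed

lemma pointwise:
  fixes c d :: "nat \<Rightarrow> real" and B :: real
  assumes I: "finite I" and J: "J \<subseteq> I" "J \<noteq> {}" and B: "B \<ge> 0"
    and dc: "\<And>j. j \<in> I \<Longrightarrow> 0 \<le> d j \<and> d j \<le> c j"
  shows "(\<Prod>j\<in>J. B * d j) * (\<Prod>j\<in>I-J. c j)
     \<le> B ^ card J * (\<Prod>j\<in>I. if j = Min J then d j else c j)"
proof -
  define k where "k = Min J"
  have fJ: "finite J" using I J finite_subset by blast
  have kJ: "k \<in> J" unfolding k_def using fJ J by simp
  have kI: "k \<in> I" using kJ J by blast
  have "(\<Prod>j\<in>J. B * d j) = B ^ card J * (d k * (\<Prod>j\<in>J-{k}. d j))"
    using fJ kJ by (simp add: prod.distrib prod.remove)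
  moreover have "(\<Prod>j\<in>J-{k}. d j) \<le> (\<Prod>j\<in>J-{k}. c j)"
    using dc J by (intro prod_mono) auto
  moreover have "(\<Prod>j\<in>I. if j = k then d j else c j) = d k * (\<Prod>j\<in>I-{k}. c j)"
    using I kI by (simp add: prod.remove)
  moreover have "(\<Prod>j\<in>I-{k}. c j) = (\<Prod>j\<in>J-{k}. c j) * (\<Prod>j\<in>I-J. c j)"
  proof -
    have "I - {k} = (J - {k}) \<union> (I - J)" using J kJ by blast
    moreover have "(J - {k}) \<inter> (I - J) = {}" by blast
    ultimately show ?thesis using I fJ by (simp add: prod.union_disjoint)
  qed
  moreover have "0 \<le> (\<Prod>j\<in>I-J. c j)" "0 \<le> d k" "0 \<le> B ^ card J"
    using dc B kI by (auto intro: prod_nonneg order_trans)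
  ultimately show ?thesis unfolding k_def[symmetric]
    by (simp add: mult_left_mono mult_right_mono mult.assoc)
qed


theorem lemma5:
  fixes N :: nat and nu :: "nat \<Rightarrow> nat \<Rightarrow> nat" and t B :: real and l :: nat
  assumes "N \<ge> 2"
    and "\<And>r. r \<ge> 1 \<Longrightarrow> (\<Sum>i=1..N. nu r i) = N"
    and "\<And>u. u \<ge> 0 \<Longrightarrow> \<exists>s. (\<Sum>r=1..s. cN N nu r) \<ge> u"
    and "t > 0" and "B > 0"
  shows "(\<Sum>s\<in>distinct_tuples l (tauN N nu t).
            \<Prod>j=1..l. cN N nu (s j) + B * DN N nu (s j))
         \<le> (\<Sum>s\<in>distinct_tuples l (tauN N nu t). \<Prod>j=1..l. cN N nu (s j))
           + (\<Sum>s=1..tauN N nu t. DN N nu s) * (t + 1) ^ (l - 1) * (1 + B) ^ l"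
proof -
  note N2 = assms(1) and sumN = assms(2)
  define T where "T = tauN N nu t"
  define c where "c = cN N nu"
  define d where "d = DN N nu"
  define I where "I = {1..l}"
  define P where "P = PiE I (\<lambda>_. {1..T})"
  define Dt where "Dt = distinct_tuples l T"
  define Q where "Q = Pow I - {{}}"
  define tm where "tm s J = (\<Prod>j\<in>J. B * d (s j)) * (\<Prod>j\<in>I-J. c (s j))" for s J
  have fI: "finite I" unfolding I_def by simp
  have fP: "finite P" unfolding P_def using fI by (intro finite_PiE) auto
  have DtP: "Dt \<subseteq> P" unfolding Dt_def P_def distinct_tuples_def I_def by blast
  have fDt: "finite Dt" using fP DtP finite_subset by blast
  have fQ: "finite Q" unfolding Q_def using fI by simp
  have bnd: "0 \<le> d r \<and> d r \<le> c r \<and> c r \<le> 1" if "r \<ge> 1" for r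
    using cD_bounds[of N nu r, OF N2 sumN[OF that]] unfolding c_def d_def by simp
  have cnn: "0 \<le> c r" if "r \<ge> 1" for r using bnd[OF that] by linarith
  have sP: "s j \<ge> 1" if "s \<in> P" "j \<in> I" for s j
    using that unfolding P_def by auto
  have Bnn: "B \<ge> 0" using assms(5) by simp
  have sumc: "(\<Sum>r=1..T. c r) \<le> t + 1"
    unfolding T_def c_def by (rule sum_c_le[OF assms(1-4)])
  have sumcnn: "0 \<le> (\<Sum>r=1..T. c r)" using bnd by (intro sum_nonneg) (metis atLeastAtMost_iff order_trans)
  have sumdnn: "0 \<le> (\<Sum>r=1..T. d r)" using bnd by (intro sum_nonneg) auto
  have tmnn: "0 \<le> tm s J" if "s \<in> P" "J \<in> Q" for s J
  proof -
    have "J \<subseteq> I" using that(2) unfolding Q_def by auto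
    thus ?thesis unfolding tm_def using bnd cnn sP[OF that(1)] Bnn
      by (intro mult_nonneg_nonneg prod_nonneg) auto
  qed
  have expand: "(\<Prod>j\<in>I. c (s j) + B * d (s j)) = (\<Prod>j\<in>I. c (s j)) + (\<Sum>J\<in>Q. tm s J)" for s
  proof -
    have "(\<Prod>j\<in>I. c (s j) + B * d (s j)) = (\<Prod>j\<in>I. B * d (s j) + c (s j))"
      by (simp add: add.commute)
    also have "\<dots> = (\<Sum>J\<in>Pow I. tm s J)" unfolding tm_def by (rule prod_add[OF fI])
    also have "Pow I = insert {} Q" unfolding Q_def by blast
    also have "(\<Sum>J\<in>insert {} Q. tm s J) = tm s {} + (\<Sum>J\<in>Q. tm s J)"
      using fQ by (intro sum.insert) (auto simp: Q_def)
    finally show ?thesis by (simp add: tm_def)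
  qed
  have pw: "tm s J \<le> B ^ card J * (\<Prod>j\<in>I. if j = Min J then d (s j) else c (s j))"
    if "s \<in> P" "J \<in> Q" for s J
  proof -
    have "J \<subseteq> I" "J \<noteq> {}" using that(2) unfolding Q_def by auto
    thus ?thesis unfolding tm_def
      by (intro pointwise[OF fI _ _ Bnn]) (use bnd sP[OF that(1)] in auto)
  qed
  have inner: "(\<Sum>s\<in>P. \<Prod>j\<in>I. if j = Min J then d (s j) else c (s j))
      = (\<Sum>r=1..T. d r) * (\<Sum>r=1..T. c r) ^ (l - 1)" if "J \<in> Q" for J
  proof -
    have kI: "Min J \<in> I" using that fI unfolding Q_def
      by (metis DiffE Min_in PowD finite_subset insertI1 subsetD)
    have "(\<Sum>s\<in>P. \<Prod>j\<in>I. if j = Min J then d (s j) else c (s j))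
        = (\<Prod>j\<in>I. \<Sum>r\<in>{1..T}. if j = Min J then d r else c r)"
      unfolding P_def by (rule prod_sum_PiE[symmetric]) (use fI in auto)
    also have "\<dots> = (\<Sum>r=1..T. d r) * (\<Prod>j\<in>I-{Min J}. \<Sum>r\<in>{1..T}. c r)"
      using fI kI by (simp add: prod.remove)
    also have "\<dots> = (\<Sum>r=1..T. d r) * (\<Sum>r=1..T. c r) ^ (l - 1)"
      using fI kI by (simp add: I_def)
    finally show ?thesis .
  qed
  have powsum: "(\<Sum>J\<in>Q. B ^ card J) \<le> (1 + B) ^ l"
  proof -
    have "(\<Sum>J\<in>Q. B ^ card J) \<le> (\<Sum>J\<in>Pow I. B ^ card J)"
      using fI Bnn by (intro sum_mono2) (auto simp: Q_def)
    also have "\<dots> = (\<Sum>J\<in>Pow I. (\<Prod>j\<in>J. B) * (\<Prod>j\<in>I-J. 1))" by simp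
    also have "\<dots> = (\<Prod>j\<in>I. B + 1)" by (rule prod_add[OF fI, symmetric])
    also have "\<dots> = (1 + B) ^ l" by (simp add: I_def add.commute)
    finally show ?thesis .
  qed
  have "(\<Sum>s\<in>Dt. \<Sum>J\<in>Q. tm s J) \<le> (\<Sum>s\<in>P. \<Sum>J\<in>Q. tm s J)"
    using fP DtP tmnn by (intro sum_mono2) (auto intro: sum_nonneg)
  also have "\<dots> = (\<Sum>J\<in>Q. \<Sum>s\<in>P. tm s J)" by (rule sum.swap)
  also have "\<dots> \<le> (\<Sum>J\<in>Q. B ^ card J * ((\<Sum>r=1..T. d r) * (\<Sum>r=1..T. c r) ^ (l - 1)))"
  proof (rule sum_mono)
    fix J assume J: "J \<in> Q"
    have "(\<Sum>s\<in>P. tm s J) \<le> (\<Sum>s\<in>P. B ^ card J * (\<Prod>j\<in>I. if j = Min J then d (s j) else c (s j)))"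
      using pw J by (intro sum_mono) auto
    also have "\<dots> = B ^ card J * ((\<Sum>r=1..T. d r) * (\<Sum>r=1..T. c r) ^ (l - 1))"
      by (simp add: sum_distrib_left[symmetric] inner[OF J])
    finally show "(\<Sum>s\<in>P. tm s J) \<le> \<dots>" .
  qed
  also have "\<dots> = (\<Sum>J\<in>Q. B ^ card J) * ((\<Sum>r=1..T. d r) * (\<Sum>r=1..T. c r) ^ (l - 1))"
    by (simp add: sum_distrib_right)
  also have "\<dots> \<le> (1 + B) ^ l * ((\<Sum>r=1..T. d r) * (t + 1) ^ (l - 1))"
    using powsum sumc sumcnn sumdnn Bnn cnn bnd
    by (intro mult_mono power_mono sum_nonneg mult_nonneg_nonneg zero_le_power) auto
  finally have main: "(\<Sum>s\<in>Dt. \<Sum>J\<in>Q. tm s J) \<le> (\<Sum>r=1..T. d r) * (t + 1) ^ (l - 1) * (1 + B) ^ l"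
    by (simp add: mult_ac)
  have "(\<Sum>s\<in>Dt. \<Prod>j\<in>I. c (s j) + B * d (s j))
      = (\<Sum>s\<in>Dt. \<Prod>j\<in>I. c (s j)) + (\<Sum>s\<in>Dt. \<Sum>J\<in>Q. tm s J)"
    by (simp add: expand sum.distrib)
  with main show ?thesis unfolding T_def c_def d_def I_def Dt_def by simp
qed

end
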